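(* Let $W$ be a positive integer and let $\mathcal H$ be a real Hilbert space of dimension $d$ with $W<d\le\infty$. Let $\Phi:\mathbb R^W\to\mathcal H$ be a $C^2$ map such that the Jacobian (differential) $J_0=\frac{\partial\Phi}{\partial\mathbf w}(\mathbf 0)$ has full rank $W$. Then the set $F_\Phi$ of GF-learnable targets is not dense in $\mathcal H$.
   Context: For a target $\mathbf f\in\mathcal H$, let $L_{\mathbf f}(\mathbf w)=\frac12\|\mathbf f-\Phi(\mathbf w)\|^2_{\mathcal H}$ and let $\mathbf w(t)$, $t\ge0$, be the solution of the gradient flow $\frac{d\mathbf w}{dt}=-\nabla_{\mathbf w}L_{\mathbf f}(\mathbf w(t))$ with $\mathbf w(0)=\mathbf 0$. Then $F_\Phi=\{\mathbf f\in\mathcal H:\inf_{t\ge0}L_{\mathbf f}(\mathbf w(t))=0\}$. *)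

theory Defs
  imports "HOL-Analysis.Analysis"
begin

definition C2_map :: "('a::real_normed_vector \<Rightarrow> 'b::real_normed_vector) \<Rightarrow> bool" where
  "C2_map \<Phi> \<longleftrightarrow> (\<exists>D1 :: 'a \<Rightarrow> ('a \<Rightarrow>\<^sub>L 'b). \<exists>D2 :: 'a \<Rightarrow> ('a \<Rightarrow>\<^sub>L ('a \<Rightarrow>\<^sub>L 'b)).
      (\<forall>w. (\<Phi> has_derivative blinfun_apply (D1 w)) (at w)) \<and>
      (\<forall>w. (D1 has_derivative blinfun_apply (D2 w)) (at w)) \<and>
      continuous_on UNIV D2)"

definition loss :: "('a \<Rightarrow> 'h::real_inner) \<Rightarrow> 'h \<Rightarrow> 'a \<Rightarrow> real" where
  "loss \<Phi> f w = (1/2) * (norm (f - \<Phi> w))\<^sup>2"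

definition gf_solution :: "('a::real_inner \<Rightarrow> 'h::real_inner) \<Rightarrow> 'h \<Rightarrow> (real \<Rightarrow> 'a) \<Rightarrow> bool" where
  "gf_solution \<Phi> f w \<longleftrightarrow> w 0 = 0 \<and>
     (\<forall>t\<ge>0. \<exists>g. (loss \<Phi> f has_derivative (\<lambda>v. g \<bullet> v)) (at (w t)) \<and>
                 (w has_vector_derivative (- g)) (at t within {0..}))"

definition F_learnable :: "('a::real_inner \<Rightarrow> 'h::real_inner) \<Rightarrow> 'h set" where
  "F_learnable \<Phi> = {f. \<exists>w. gf_solution \<Phi> f w \<and> (INF t\<in>{0..}. loss \<Phi> f (w t)) = 0}"

end

theory Submission
  imports Defs
begin


lemma inj_from_rank:
  fixes J :: "real^'n \<Rightarrow> 'h::real_normed_vector"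
  assumes lin: "linear J" and rank: "dim (range J) = CARD('n)" and z: "J w = 0"
  shows "w = 0"
proof (rule ccontr)
  assume w0: "w \<noteq> 0"
  define B where "B = extend_basis {w}"
  have indw: "independent {w}" using w0 by simp
  have iB: "independent B" and wB: "w \<in> B" and sB: "span B = UNIV"
    using indw extend_basis_superset[OF indw] independent_extend_basis[OF indw] span_extend_basis[OF indw]
    by (auto simp: B_def)
  have fB: "finite B" using iB by (simp add: finiteI_independent)
  have cB: "card B = CARD('n)"
  proof -
    have "card B = dim (UNIV :: (real^'n) set)"
      using basis_card_eq_dim[of B UNIV] iB sB by auto
    then show ?thesis by simp
  qed
  have "range J = J ` span B" using sB by simp
  also have "\<dots> = span (J ` B)" using linear_span_image[OF lin] by simp
  also have "J ` B = insert 0 (J ` (B - {w}))" using wB z by auto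
  finally have "range J = span (J ` (B - {w}))" by simp
  then have "dim (range J) \<le> card (J ` (B - {w}))"
    using dim_le_card[of "range J" "J ` (B - {w})"] fB by auto
  also have "\<dots> \<le> card (B - {w})" using fB by (simp add: card_image_le)
  also have "\<dots> = CARD('n) - 1" using cB wB fB by simp
  finally have X: "dim (range J) \<le> CARD('n) - 1" .
  have "CARD('n) > 0" by simp
  then show False using X rank by arith
qed



lemma lower_bound:
  fixes J :: "real^'n \<Rightarrow> 'h::real_normed_vector"
  assumes bl: "bounded_linear J" and inj: "\<And>w. J w = 0 \<Longrightarrow> w = 0"
  shows "\<exists>c>0. \<forall>w. c * norm w \<le> norm (J w)"
proof -
  have cont: "continuous_on (sphere 0 1) (\<lambda>w. norm (J w))"
    using bl by (intro continuous_intros) (simp add: linear_continuous_on)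
  have ne: "sphere (0::real^'n) 1 \<noteq> {}"
  proof -
    obtain b :: "real^'n" where "b \<in> Basis" using nonempty_Basis by blast
    then have "norm b = 1" by simp
    then show ?thesis by auto
  qed
  obtain x where x: "x \<in> sphere 0 1" and mn: "\<And>y. y \<in> sphere 0 1 \<Longrightarrow> norm (J x) \<le> norm (J y)"
    using continuous_attains_inf[OF compact_sphere ne cont] by blast
  have "J x \<noteq> 0" using x inj by fastforce
  then have c: "norm (J x) > 0" by simp
  have "norm (J x) * norm w \<le> norm (J w)" for w
  proof (cases "w = 0")
    case True then show ?thesis by simp
  next
    case False
    have "norm (J x) \<le> norm (J ((1 / norm w) *\<^sub>R w))" using mn False by simp
    also have "\<dots> = norm (J w) / norm w"
      using False by (simp add: linear_scale[OF bounded_linear.linear[OF bl]])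
    finally show ?thesis using False by (simp add: field_simps)
  qed
  then show ?thesis using c by blast
qed

lemma orth_vec:
  fixes J :: "real^'n \<Rightarrow> 'h::real_inner"
  assumes bl: "bounded_linear J" and c: "c > 0" and lb: "\<And>w. c * norm w \<le> norm (J w)"
    and s: "s \<notin> range J"
  shows "\<exists>u. norm u = 1 \<and> (\<forall>v. u \<bullet> J v = 0)"
proof -
  let ?F = "\<lambda>w. norm (s - J w)"
  define R where "R = 2 * norm s / c"
  have cont: "continuous_on (cball 0 R) ?F"
    using bl by (intro continuous_intros) (simp add: linear_continuous_on)
  have R0: "R \<ge> 0" unfolding R_def using c by simp
  have ne: "cball (0::real^'n) R \<noteq> {}" using R0 by simp
  obtain x where x: "x \<in> cball 0 R" and mn: "\<And>y. y \<in> cball 0 R \<Longrightarrow> ?F x \<le> ?F y"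
    using continuous_attains_inf[OF compact_cball ne cont] by blast
  have x0: "?F x \<le> norm s" using mn[of 0] ne c by (simp add: R_def linear_0[OF bounded_linear.linear[OF bl]])
  have glob: "?F x \<le> ?F y" for y
  proof (cases "y \<in> cball 0 R")
    case True then show ?thesis using mn by blast
  next
    case False
    then have "norm y > R" by simp
    then have "c * norm y > 2 * norm s" using c by (simp add: R_def field_simps)
    moreover have "norm (J y) \<le> norm s + ?F y" using norm_triangle_ineq4[of s "s - J y"] by simp
    ultimately show ?thesis using lb[of y] x0 by linarith
  qed
  define z where "z = s - J x"
  have lin: "linear J" using bl by (simp add: bounded_linear.linear)
  have zne: "z \<noteq> 0" using s by (auto simp: z_def)
  have orth: "z \<bullet> J v = 0" for v
  proof (rule ccontr)
    assume ne0: "z \<bullet> J v \<noteq> 0"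
    define a where "a = J v"
    define t where "t = (z \<bullet> a) / (a \<bullet> a + 1)"
    have "?F x \<le> ?F (x + t *\<^sub>R v)" by (rule glob)
    also have "s - J (x + t *\<^sub>R v) = z - t *\<^sub>R a"
      by (simp add: z_def a_def linear_add[OF lin] linear_scale[OF lin])
    finally have "norm z \<le> norm (z - t *\<^sub>R a)" by (simp add: z_def)
    then have "(norm z)^2 \<le> (norm (z - t *\<^sub>R a))^2" by (simp add: power_mono)
    then have "z \<bullet> z \<le> z \<bullet> z - 2 * t * (z \<bullet> a) + t * t * (a \<bullet> a)"
      by (simp add: power2_norm_eq_inner inner_diff_left inner_diff_right inner_commute algebra_simps)
    then have ineq: "0 \<le> t * (t * (a \<bullet> a) - 2 * (z \<bullet> a))" by (simp add: algebra_simps)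
    have aa: "a \<bullet> a \<ge> 0" by simp
    have q1: "a \<bullet> a + 1 \<noteq> 0" using aa by linarith
    have p: "z \<bullet> a = t * (a \<bullet> a + 1)" using q1 by (simp add: t_def)
    have tne: "t \<noteq> 0" using ne0 q1 unfolding t_def a_def by simp
    have "t * (t * (a \<bullet> a) - 2 * (z \<bullet> a)) = - ((t * t) * (a \<bullet> a + 2))"
      unfolding p by (simp add: algebra_simps)
    moreover have "t * t > 0" using tne not_real_square_gt_zero by blast
    moreover have "a \<bullet> a + 2 > 0" using aa by linarith
    ultimately have "t * (t * (a \<bullet> a) - 2 * (z \<bullet> a)) < 0"
      using mult_pos_pos[of "t * t" "a \<bullet> a + 2"] by simp
    then show False using ineq by linarith
  qed
  define u where "u = (1 / norm z) *\<^sub>R z"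
  have "norm u = 1" using zne by (simp add: u_def)
  moreover have "u \<bullet> J v = 0" for v using orth by (simp add: u_def)
  ultimately show ?thesis by blast
qed



lemma second_order:
  fixes \<Phi> :: "'a::real_normed_vector \<Rightarrow> 'b::real_normed_vector"
  assumes d1: "\<And>w. (\<Phi> has_derivative blinfun_apply (D1 w)) (at w)"
    and d2: "(D1 has_derivative blinfun_apply D20) (at 0)"
  shows "\<exists>K>0. \<exists>\<rho>>0. \<forall>w. norm w < \<rho> \<longrightarrow> norm (\<Phi> w - \<Phi> 0 - D1 0 w) \<le> K * (norm w)^2"
proof -
  define K where "K = norm D20 + 1"
  have K: "K > 0" unfolding K_def using norm_ge_zero[of D20] by linarith
  obtain \<rho> where r: "\<rho> > 0" and rb: "\<And>y. norm (y - 0) < \<rho> \<Longrightarrow> norm (D1 y - D1 0 - D20 (y - 0)) \<le> 1 * norm (y - 0)"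
    using d2 unfolding has_derivative_at_alt by (meson zero_less_one)
  have dbound: "norm (D1 y - D1 0) \<le> K * norm y" if "norm y < \<rho>" for y
  proof -
    have "norm (D1 y - D1 0) \<le> norm (D1 y - D1 0 - D20 y) + norm (D20 y)"
      by (metis diff_add_cancel norm_triangle_ineq)
    also have "\<dots> \<le> norm y + norm D20 * norm y"
      using rb[of y] that norm_blinfun[of D20 y] by simp
    finally show ?thesis by (simp add: K_def algebra_simps)
  qed
  have "norm (\<Phi> w - \<Phi> 0 - D1 0 w) \<le> K * (norm w)^2" if w: "norm w < \<rho>" for w
  proof -
    let ?S = "cball (0::'a) (norm w)"
    have "norm (\<Phi> w - \<Phi> 0 - blinfun_apply (D1 0) (w - 0)) \<le> norm (w - 0) * (K * norm w)"
    proof (rule differentiable_bound_linearization[where S="?S" and f'="\<lambda>x. blinfun_apply (D1 x)"])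
      show "0 + t *\<^sub>R (w - 0) \<in> ?S" if "t \<in> {0..1}" for t
        using that mult_left_le_one_le[of "norm w" t] by (auto simp: abs_if mult.commute)
      show "(\<Phi> has_derivative blinfun_apply (D1 x)) (at x within ?S)" for x
        using d1 has_derivative_at_withinI by blast
      show "onorm (blinfun_apply (D1 x) - blinfun_apply (D1 0)) \<le> K * norm w" if "x \<in> ?S" for x
      proof -
        have "blinfun_apply (D1 x) - blinfun_apply (D1 0) = blinfun_apply (D1 x - D1 0)"
          by (simp add: fun_eq_iff blinfun.diff_left)
        then have "onorm (blinfun_apply (D1 x) - blinfun_apply (D1 0)) = norm (D1 x - D1 0)"
          by (simp add: norm_blinfun.rep_eq)
        also have "\<dots> \<le> K * norm x" using dbound[of x] that w by simp
        also have "\<dots> \<le> K * norm w" using that K by simp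
        finally show ?thesis .
      qed
      show "0 \<in> ?S" by simp
    qed
    then show ?thesis by (simp add: power2_eq_square algebra_simps)
  qed
  then show ?thesis using K r by blast
qed



lemma gf_props:
  fixes \<Phi> :: "'a::real_inner \<Rightarrow> 'h::real_inner"
  assumes gf: "gf_solution \<Phi> f w"
  shows "continuous_on {0..} w" and "\<And>t. t \<ge> 0 \<Longrightarrow> loss \<Phi> f (w t) \<le> loss \<Phi> f (w 0)"
proof -
  have "\<forall>t. \<exists>g. t \<ge> 0 \<longrightarrow> (loss \<Phi> f has_derivative (\<lambda>v. g \<bullet> v)) (at (w t)) \<and>
                 (w has_vector_derivative (- g)) (at t within {0..})"
    using gf unfolding gf_solution_def by blast
  then obtain G where G: "\<And>t. t \<ge> 0 \<Longrightarrow> (loss \<Phi> f has_derivative (\<lambda>v. G t \<bullet> v)) (at (w t)) \<and>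
                 (w has_vector_derivative (- G t)) (at t within {0..})"
    by metis
  have wd: "(w has_derivative (\<lambda>h. h *\<^sub>R (- G t))) (at t within {0..})" if "t \<ge> 0" for t
    using G[OF that] by (simp add: has_vector_derivative_def)
  show cw: "continuous_on {0..} w"
    unfolding continuous_on_eq_continuous_within
    using wd has_derivative_continuous by fastforce
  have ld: "((loss \<Phi> f \<circ> w) has_derivative (\<lambda>h. G t \<bullet> (h *\<^sub>R (- G t)))) (at t within {0..})"
    if "t \<ge> 0" for t
  proof -
    have "(loss \<Phi> f has_derivative (\<lambda>v. G t \<bullet> v)) (at (w t) within w ` {0..})"
      using G[OF that] has_derivative_at_withinI by blast
    from diff_chain_within[OF wd[OF that] this] show ?thesis by (simp add: o_def)
  qed
  show "loss \<Phi> f (w t) \<le> loss \<Phi> f (w 0)" if t: "t \<ge> 0" for t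
  proof -
    have "\<exists>x\<in>{0..t}. (loss \<Phi> f \<circ> w) t - (loss \<Phi> f \<circ> w) 0 = G x \<bullet> ((t - 0) *\<^sub>R (- G x))"
    proof (rule mvt_very_simple[where f' = "\<lambda>x h. G x \<bullet> (h *\<^sub>R (- G x))"])
      show "0 \<le> t" by (rule t)
      show "((loss \<Phi> f \<circ> w) has_derivative (\<lambda>h. G x \<bullet> (h *\<^sub>R (- G x)))) (at x within {0..t})"
        if "0 \<le> x" "x \<le> t" for x
        using ld[OF that(1)] by (rule has_derivative_subset) auto
    qed
    then obtain x where "(loss \<Phi> f \<circ> w) t - (loss \<Phi> f \<circ> w) 0 = G x \<bullet> ((t - 0) *\<^sub>R (- G x))" by blast
    then have "loss \<Phi> f (w t) - loss \<Phi> f (w 0) = - t * (G x \<bullet> G x)" by simp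
    moreover have "t * (G x \<bullet> G x) \<ge> 0" using t by simp
    ultimately show ?thesis by linarith
  qed
qed



lemma card_le_dim_range:
  fixes J :: "real^'n \<Rightarrow> 'h::real_normed_vector"
  assumes lin: "linear J" and S: "independent S" "S \<subseteq> range J"
  shows "card S \<le> dim (range J)"
proof -
  obtain B where B: "B \<subseteq> range J" "independent B" "range J \<subseteq> span B"
    using real_vector.maximal_independent_subset[of "range J"] by blast
  have T: "range J \<subseteq> span (J ` Basis)"
    using real_vector.linear_span_image[OF lin, of Basis] by (simp add: span_Basis)
  have fB: "finite B"
    using real_vector.independent_span_bound[of "J ` Basis" B] B T by auto
  have "span B = span (range J)"
  proof
    show "span B \<subseteq> span (range J)" using B(1) by (rule real_vector.span_mono)
    show "span (range J) \<subseteq> span B" using real_vector.span_mono[OF B(3)] real_vector.span_span[of B] by simp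
  qed
  then have d: "dim (range J) = card B" using real_vector.dim_eq_card[OF _ B(2)] by simp
  have "card S \<le> card B"
    using real_vector.independent_span_bound[OF fB S(1)] S(2) B(3) by auto
  then show ?thesis using d by simp
qed


theorem theorem2:
  fixes \<Phi> :: "real^'n \<Rightarrow> 'h::{real_inner, complete_space}"
    and J0 :: "real^'n \<Rightarrow> 'h"
  assumes dimH: "\<exists>S::'h set. finite S \<and> independent S \<and> card S > CARD('n)"
    and C2: "C2_map \<Phi>"
    and J0: "(\<Phi> has_derivative J0) (at 0)"
    and rank: "dim (range J0) = CARD('n)"
  shows "closure (F_learnable \<Phi>) \<noteq> UNIV"
proof -
  obtain D1 :: "(real^'n) \<Rightarrow> ((real^'n) \<Rightarrow>\<^sub>L 'h)" and D2 where
    d1: "\<And>w. (\<Phi> has_derivative blinfun_apply (D1 w)) (at w)" and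
    d2: "\<And>w. (D1 has_derivative blinfun_apply (D2 w)) (at w)"
    using C2 unfolding C2_map_def by blast
  have JD: "J0 = blinfun_apply (D1 0)" using has_derivative_unique[OF J0 d1[of 0]] .
  have bl: "bounded_linear J0" using J0 by (rule has_derivative_bounded_linear)
  have lin: "linear J0" using bl by (rule bounded_linear.linear)
  have inj: "\<And>w. J0 w = 0 \<Longrightarrow> w = 0" using inj_from_rank[OF lin rank] by blast
  obtain c where c: "c > 0" and lb: "\<And>w. c * norm w \<le> norm (J0 w)"
    using lower_bound[OF bl inj] by blast
  obtain S :: "'h set" where S: "finite S" "independent S" "card S > CARD('n)" using dimH by blast
  obtain s where s: "s \<notin> range J0"
  proof -
    have "\<not> S \<subseteq> range J0"
    proof
      assume "S \<subseteq> range J0"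
      then have "card S \<le> dim (range J0)" by (rule card_le_dim_range[OF lin S(2)])
      then show False using S(3) rank by simp
    qed
    then show ?thesis using that by blast
  qed
  obtain u where u1: "norm u = 1" and uo: "\<And>v. u \<bullet> J0 v = 0"
    using orth_vec[OF bl c lb s] by blast
  obtain K \<rho>1 where K: "K > 0" and r1: "\<rho>1 > 0" and
    Rb: "\<And>w. norm w < \<rho>1 \<Longrightarrow> norm (\<Phi> w - \<Phi> 0 - J0 w) \<le> K * (norm w)^2"
    using second_order[OF d1 d2[of 0]] unfolding JD by blast
  define r where "r = c^2 / (16 * K)"
  define \<rho> where "\<rho> = min (\<rho>1 / 2) (c / (8 * K))"
  define f0 where "f0 = \<Phi> 0 + r *\<^sub>R u"
  define \<gamma> where "\<gamma> = c^2 * \<rho>^2 / 8"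
  define \<sigma> where "\<sigma> = sqrt (r^2 + \<gamma>)"
  define \<eta> where "\<eta> = min (r / 4) ((\<sigma> - r) / 3)"
  have r0: "r > 0" using c K by (simp add: r_def)
  have \<rho>0: "\<rho> > 0" using c K r1 by (simp add: \<rho>_def)
  have \<rho>1: "\<rho> < \<rho>1" using r1 by (simp add: \<rho>_def)
  have Kr: "K * \<rho> \<le> c / 8" using K unfolding \<rho>_def by (simp add: field_simps min_def)
  have Kr2: "K * \<rho>^2 \<le> r / 2"
  proof -
    have "K * \<rho>^2 = (K * \<rho>) * \<rho>" by (simp add: power2_eq_square)
    also have "\<dots> \<le> (c / 8) * (c / (8 * K))"
      using Kr \<rho>0 c by (intro mult_mono) (auto simp: \<rho>_def)
    also have "\<dots> \<le> r / 2" using c K by (simp add: r_def field_simps power2_eq_square)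
    finally show ?thesis .
  qed
  have \<gamma>0: "\<gamma> > 0" using c \<rho>0 by (simp add: \<gamma>_def)
  have \<sigma>r: "\<sigma> > r"
  proof -
    have "sqrt (r^2) < \<sigma>" unfolding \<sigma>_def using \<gamma>0 by (intro real_sqrt_less_mono) simp
    then show ?thesis using r0 by simp
  qed
  have \<eta>0: "\<eta> > 0" using r0 \<sigma>r by (simp add: \<eta>_def)
  have keyA: "norm (f0 - \<Phi> w) \<ge> r / 2" and uprod: "u \<bullet> (\<Phi> w - \<Phi> 0) \<le> K * \<rho>^2"
    if w: "norm w \<le> \<rho>" for w
  proof -
    define \<delta> where "\<delta> = \<Phi> w - \<Phi> 0"
    have "u \<bullet> \<delta> = u \<bullet> (\<Phi> w - \<Phi> 0 - J0 w) + u \<bullet> J0 w"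
      by (simp add: \<delta>_def inner_diff_right)
    then have ud: "u \<bullet> \<delta> = u \<bullet> (\<Phi> w - \<Phi> 0 - J0 w)" using uo by simp
    have "\<bar>u \<bullet> (\<Phi> w - \<Phi> 0 - J0 w)\<bar> \<le> norm (\<Phi> w - \<Phi> 0 - J0 w)"
      using Cauchy_Schwarz_ineq2[of u] u1 by simp
    also have "\<dots> \<le> K * (norm w)^2" using Rb w \<rho>1 by simp
    also have "\<dots> \<le> K * \<rho>^2" using K w by (simp add: power_mono)
    finally have ub: "\<bar>u \<bullet> \<delta>\<bar> \<le> K * \<rho>^2" using ud by simp
    then show "u \<bullet> (\<Phi> w - \<Phi> 0) \<le> K * \<rho>^2" by (simp add: \<delta>_def)
    have "f0 - \<Phi> w = r *\<^sub>R u - \<delta>" by (simp add: f0_def \<delta>_def)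
    moreover have "u \<bullet> (r *\<^sub>R u - \<delta>) \<le> norm (r *\<^sub>R u - \<delta>)"
      using Cauchy_Schwarz_ineq2[of u "r *\<^sub>R u - \<delta>"] u1 by simp
    moreover have "u \<bullet> (r *\<^sub>R u - \<delta>) = r - u \<bullet> \<delta>"
      using u1 by (simp add: inner_diff_right dot_square_norm)
    ultimately show "norm (f0 - \<Phi> w) \<ge> r / 2" using ub Kr2 by simp
  qed
  have keyB: "norm (f0 - \<Phi> w) \<ge> \<sigma>" if w: "norm w = \<rho>" for w
  proof -
    define \<delta> where "\<delta> = \<Phi> w - \<Phi> 0"
    have ud: "u \<bullet> \<delta> \<le> K * \<rho>^2" using uprod[of w] w by (simp add: \<delta>_def)
    have "norm (J0 w) \<le> norm \<delta> + norm (\<Phi> w - \<Phi> 0 - J0 w)"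
      using norm_triangle_ineq4[of \<delta> "\<Phi> w - \<Phi> 0 - J0 w"] by (simp add: \<delta>_def)
    moreover have "norm (\<Phi> w - \<Phi> 0 - J0 w) \<le> K * \<rho>^2" using Rb[of w] w \<rho>1 by simp
    moreover have "K * \<rho>^2 \<le> c * \<rho> / 8"
      using Kr \<rho>0 by (simp add: power2_eq_square mult.assoc[symmetric] mult_right_mono)
    moreover have "c * \<rho> \<le> norm (J0 w)" using lb[of w] w by simp
    ultimately have nd: "norm \<delta> \<ge> c * \<rho> / 2" using mult_pos_pos[OF c \<rho>0] by linarith
    have nd2: "(norm \<delta>)^2 \<ge> c^2 * \<rho>^2 / 4"
    proof -
      have "(c * \<rho> / 2)^2 \<le> (norm \<delta>)^2" using nd c \<rho>0 by (intro power_mono) auto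
      then show ?thesis by (simp add: power_mult_distrib power_divide)
    qed
    have uu: "u \<bullet> u = 1" using u1 by (simp add: dot_square_norm)
    have "(norm (r *\<^sub>R u - \<delta>))^2 = (r *\<^sub>R u - \<delta>) \<bullet> (r *\<^sub>R u - \<delta>)"
      by (simp only: power2_norm_eq_inner)
    also have "\<dots> = r^2 * (u \<bullet> u) - 2 * r * (u \<bullet> \<delta>) + \<delta> \<bullet> \<delta>"
      by (simp add: inner_diff_left inner_diff_right inner_commute power2_eq_square algebra_simps)
    also have "\<delta> \<bullet> \<delta> = (norm \<delta>)^2" by (simp only: power2_norm_eq_inner)
    finally have "(norm (r *\<^sub>R u - \<delta>))^2 = r^2 - 2 * r * (u \<bullet> \<delta>) + (norm \<delta>)^2"
      using uu by simp
    moreover have "2 * r * (u \<bullet> \<delta>) \<le> c^2 * \<rho>^2 / 8"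
    proof -
      have "2 * r * (u \<bullet> \<delta>) \<le> 2 * r * (K * \<rho>^2)" using ud r0 by simp
      also have "\<dots> = c^2 * \<rho>^2 / 8" using K by (simp add: r_def field_simps)
      finally show ?thesis .
    qed
    ultimately have "(norm (r *\<^sub>R u - \<delta>))^2 \<ge> r^2 + \<gamma>" using nd2 by (simp add: \<gamma>_def)
    then have "\<sigma> \<le> sqrt ((norm (r *\<^sub>R u - \<delta>))^2)" unfolding \<sigma>_def by (rule real_sqrt_le_mono)
    moreover have "r *\<^sub>R u - \<delta> = f0 - \<Phi> w" by (simp add: f0_def \<delta>_def algebra_simps)
    ultimately show ?thesis by simp
  qed
  have notF: "f \<notin> F_learnable \<Phi>" if f: "norm (f - f0) < \<eta>" for f
  proof
    assume "f \<in> F_learnable \<Phi>"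
    then obtain w where gf: "gf_solution \<Phi> f w" and inf0: "(INF t\<in>{0..}. loss \<Phi> f (w t)) = 0"
      unfolding F_learnable_def by blast
    have w0: "w 0 = 0" using gf by (simp add: gf_solution_def)
    note cw = gf_props(1)[OF gf] and mono = gf_props(2)[OF gf]
    have close: "\<bar>norm (f - \<Phi> v) - norm (f0 - \<Phi> v)\<bar> \<le> \<eta>" for v
    proof -
      have "\<bar>norm (f - \<Phi> v) - norm (f0 - \<Phi> v)\<bar> \<le> norm ((f - \<Phi> v) - (f0 - \<Phi> v))"
        by (rule norm_triangle_ineq3)
      also have "\<dots> = norm (f - f0)" by simp
      finally show ?thesis using f by simp
    qed
    have N00: "norm (f0 - \<Phi> 0) = r" using u1 r0 by (simp add: f0_def)
    have stay: "norm (w t) < \<rho>" if t: "t \<ge> 0" for t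
    proof (rule ccontr)
      assume "\<not> norm (w t) < \<rho>"
      then have ge: "norm (w t) \<ge> \<rho>" by simp
      have "continuous_on {0..t} (\<lambda>x. norm (w x))"
        using cw by (intro continuous_intros) (rule continuous_on_subset, auto)
      then obtain t1 where t1: "0 \<le> t1" "t1 \<le> t" "norm (w t1) = \<rho>"
        using IVT'[of "\<lambda>x. norm (w x)" 0 \<rho> t] ge t \<rho>0 w0 by auto
      have "loss \<Phi> f (w t1) \<le> loss \<Phi> f (w 0)" using mono t1 by simp
      then have "(norm (f - \<Phi> (w t1)))^2 \<le> (norm (f - \<Phi> 0))^2" using w0 by (simp add: loss_def)
      then have le: "norm (f - \<Phi> (w t1)) \<le> norm (f - \<Phi> 0)"
        using power2_le_imp_le by fastforce
      have "norm (f - \<Phi> 0) \<le> r + \<eta>" using close[of 0] N00 by linarith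
      moreover have "norm (f - \<Phi> (w t1)) \<ge> \<sigma> - \<eta>" using close[of "w t1"] keyB[OF t1(3)] by linarith
      moreover have "\<eta> \<le> (\<sigma> - r) / 3" unfolding \<eta>_def by (rule min.cobounded2)
      ultimately show False using le \<eta>0 \<sigma>r by argo
    qed
    have lowb: "r^2 / 32 \<le> loss \<Phi> f (w t)" if t: "t \<in> {0..}" for t
    proof -
      have "norm (f0 - \<Phi> (w t)) \<ge> r / 2" using keyA[of "w t"] stay[of t] t by simp
      moreover have "\<eta> \<le> r / 4" unfolding \<eta>_def by (rule min.cobounded1)
      ultimately have n: "norm (f - \<Phi> (w t)) \<ge> r / 4" using close[of "w t"] by linarith
      have "(r / 4)^2 \<le> (norm (f - \<Phi> (w t)))^2" using n r0 by (intro power_mono) auto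
      then show ?thesis by (simp add: loss_def power_divide)
    qed
    have "r^2 / 32 \<le> (INF t\<in>{0..}. loss \<Phi> f (w t))"
      by (rule cINF_greatest) (use lowb in auto)
    then show False using inf0 r0 by simp
  qed
  have "F_learnable \<Phi> \<subseteq> - ball f0 \<eta>"
    using notF by (auto simp: dist_norm norm_minus_commute)
  then have "closure (F_learnable \<Phi>) \<subseteq> - ball f0 \<eta>"
    by (rule closure_minimal) (simp add: closed_Compl)
  moreover have "f0 \<in> ball f0 \<eta>" using \<eta>0 by simp
  ultimately show ?thesis by blast
qed

end
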